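(* Let $G$ be a grid-labelled graph of type $(a,b)$ with $m\ge 1$ edges, none of which is diagonal. Let $\rho_0=|1\rangle\langle 1|\otimes|1\rangle\langle 1|$ on $\mathbb{C}^a\otimes\mathbb{C}^b$. Then there exist local unitaries $U_1,\dots,U_m$ (each of the form $U_x=V_x\otimes W_x$ with $V_x$ unitary on $\mathbb{C}^a$ and $W_x$ unitary on $\mathbb{C}^b$), one for each edge, such that $$\rho(G)=\frac{1}{m}\sum_{x=1}^m U_x\rho_0U_x^\dagger .$$ In particular $\rho(G)$ can be obtained from $\rho_0$ by a protocol using only local unitaries and $\log m$ bits of classical communication (one party samples $x\in[m]$ uniformly and sends it to the other).
   Context: A grid-labelled graph of type $(a,b)$ is a simple graph $G$ whose vertex set is the grid $[a]\times[b]$. Its combinatorial Laplacian is $L(G)=D(G)-A(G)$ (degree matrix minus adjacency matrix), indexed by vertices. If $G$ has $m\ge1$ edges, $\rho(G)=L(G)/(2m)$, viewed as a density matrix on $\mathbb{C}^a\otimes\mathbb{C}^b$ with vertex $(i,j)$ corresponding to the standard basis vector $|i\rangle\otimes|j\rangle$; equivalently $\rho(G)=\frac1m\sum_{\{(i,j),(k,l)\}\in E(G)}|\psi\rangle\langle\psi|$ with $|\psi\rangle=\frac{1}{\sqrt2}(|i\rangle|j\rangle-|k\rangle|l\rangle)$. An edge $\{(i,j),(k,l)\}$ is horizontal if $i=k$, vertical if $j=l$, and diagonal if $i\neq k$ and $j\neq l$. *)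

theory Defs
  imports Complex_Main "Jordan_Normal_Form.Matrix"
begin

text \<open>Conventions: the grid [a] x [b] is represented 0-indexed as
  {0..<a} x {0..<b}; vertex (i,j) corresponds to basis vector |i> (x) |j>,
  i.e. to index i*b + j of C^(a*b). The paper's |1> is basis index 0.\<close>

definition grid :: "nat \<Rightarrow> nat \<Rightarrow> (nat \<times> nat) set" where
  "grid a b = {0..<a} \<times> {0..<b}"

definition grid_graph :: "nat \<Rightarrow> nat \<Rightarrow> (nat \<times> nat) set set \<Rightarrow> bool" where
  "grid_graph a b E \<longleftrightarrow> (\<forall>e\<in>E. \<exists>u v. u \<in> grid a b \<and> v \<in> grid a b \<and> u \<noteq> v \<and> e = {u, v})"

definition diagonal_edge :: "(nat \<times> nat) set \<Rightarrow> bool" where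
  "diagonal_edge e \<longleftrightarrow> (\<exists>i j k l. e = {(i,j),(k,l)} \<and> i \<noteq> k \<and> j \<noteq> l)"

definition vtx :: "nat \<Rightarrow> nat \<Rightarrow> nat \<times> nat" where
  "vtx b p = (p div b, p mod b)"

definition laplacian :: "nat \<Rightarrow> nat \<Rightarrow> (nat \<times> nat) set set \<Rightarrow> complex mat" where
  "laplacian a b E = mat (a*b) (a*b) (\<lambda>(p,q).
     if p = q then of_nat (card {e\<in>E. vtx b p \<in> e})
     else if {vtx b p, vtx b q} \<in> E then -1 else 0)"

definition rho :: "nat \<Rightarrow> nat \<Rightarrow> (nat \<times> nat) set set \<Rightarrow> complex mat" where
  "rho a b E = (1 / (2 * of_nat (card E))) \<cdot>\<^sub>m laplacian a b E"

definition kron :: "complex mat \<Rightarrow> complex mat \<Rightarrow> complex mat" where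
  "kron A B = mat (dim_row A * dim_row B) (dim_col A * dim_col B)
     (\<lambda>(i,j). A $$ (i div dim_row B, j div dim_col B) * B $$ (i mod dim_row B, j mod dim_col B))"

definition dagger :: "complex mat \<Rightarrow> complex mat" where
  "dagger A = mat (dim_col A) (dim_row A) (\<lambda>(i,j). cnj (A $$ (j,i)))"

definition unitary_mat :: "nat \<Rightarrow> complex mat \<Rightarrow> bool" where
  "unitary_mat n U \<longleftrightarrow> U \<in> carrier_mat n n \<and> dagger U * U = 1\<^sub>m n \<and> U * dagger U = 1\<^sub>m n"

definition proj_basis :: "nat \<Rightarrow> nat \<Rightarrow> complex mat" where
  "proj_basis n k = mat n n (\<lambda>(i,j). if i = k \<and> j = k then 1 else 0)"

definition rho0 :: "nat \<Rightarrow> nat \<Rightarrow> complex mat" where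
  "rho0 a b = kron (proj_basis a 0) (proj_basis b 0)"

definition mat_sum :: "nat \<Rightarrow> ('i \<Rightarrow> complex mat) \<Rightarrow> 'i set \<Rightarrow> complex mat" where
  "mat_sum n f I = mat n n (\<lambda>(i,j). \<Sum>x\<in>I. f x $$ (i,j))"

end

theory Submission
  imports Defs
begin

lemma mult_entry:
  assumes "dim_col A = n" "dim_row B = n" "i < dim_row A" "j < dim_col B"
  shows "(A * B) $$ (i,j) = (\<Sum>k<n. A $$ (i,k) * B $$ (k,j))"
  using assms by (simp add: scalar_prod_def row_def col_def atLeast0LessThan)

lemma dagger_dims[simp]: "dim_row (dagger A) = dim_col A" "dim_col (dagger A) = dim_row A"
  by (simp_all add: dagger_def)

lemma dagger_index[simp]: "i < dim_col A \<Longrightarrow> j < dim_row A \<Longrightarrow> dagger A $$ (i,j) = cnj (A $$ (j,i))"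
  by (simp add: dagger_def)

lemma perm_unitary:
  assumes U: "unitary_mat n H" and tau: "bij_betw \<tau> {..<n} {..<n}"
  shows "unitary_mat n (mat n n (\<lambda>(r,s). H $$ (\<tau> r, s)))"
proof -
  let ?M = "mat n n (\<lambda>(r,s). H $$ (\<tau> r, s))"
  have Hc: "H \<in> carrier_mat n n" using U unfolding unitary_mat_def by auto
  have t: "\<And>r. r < n \<Longrightarrow> \<tau> r < n" using tau by (auto simp: bij_betw_def)
  have inj: "\<And>r s. r < n \<Longrightarrow> s < n \<Longrightarrow> \<tau> r = \<tau> s \<Longrightarrow> r = s"
    using tau by (auto simp: bij_betw_def inj_on_def)
  have e1: "\<And>s t. s < n \<Longrightarrow> t < n \<Longrightarrow> (dagger H * H) $$ (s,t) = (if s = t then 1 else 0)"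
    using U unfolding unitary_mat_def by auto
  have e2: "\<And>s t. s < n \<Longrightarrow> t < n \<Longrightarrow> (H * dagger H) $$ (s,t) = (if s = t then 1 else 0)"
    using U unfolding unitary_mat_def by auto
  have "dagger ?M * ?M = 1\<^sub>m n"
  proof (rule eq_matI)
    fix s t assume st: "s < dim_row (1\<^sub>m n)" "t < dim_col (1\<^sub>m n)"
    have "(dagger ?M * ?M) $$ (s,t) = (\<Sum>r<n. cnj (H $$ (\<tau> r, s)) * H $$ (\<tau> r, t))"
      using st by (subst mult_entry[where n=n]) auto
    also have "\<dots> = (\<Sum>k<n. cnj (H $$ (k, s)) * H $$ (k, t))"
      using sum.reindex_bij_betw[OF tau, of "\<lambda>k. cnj (H $$ (k, s)) * H $$ (k, t)"] by simp
    also have "\<dots> = (dagger H * H) $$ (s,t)"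
      using st Hc by (subst mult_entry[where n=n]) auto
    finally show "(dagger ?M * ?M) $$ (s,t) = 1\<^sub>m n $$ (s,t)" using st e1 by simp
  qed auto
  moreover have "?M * dagger ?M = 1\<^sub>m n"
  proof (rule eq_matI)
    fix s t assume st: "s < dim_row (1\<^sub>m n)" "t < dim_col (1\<^sub>m n)"
    have "(?M * dagger ?M) $$ (s,t) = (\<Sum>k<n. H $$ (\<tau> s, k) * cnj (H $$ (\<tau> t, k)))"
      using st by (subst mult_entry[where n=n]) auto
    also have "\<dots> = (H * dagger H) $$ (\<tau> s, \<tau> t)"
      using st Hc t by (subst mult_entry[where n=n]) auto
    finally show "(?M * dagger ?M) $$ (s,t) = 1\<^sub>m n $$ (s,t)" using st e2 t inj by auto
  qed auto
  ultimately show ?thesis unfolding unitary_mat_def by auto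
qed

lemma one_unitary: "unitary_mat n (1\<^sub>m n)"
proof -
  have "dagger (1\<^sub>m n) = 1\<^sub>m n" by (rule eq_matI) auto
  thus ?thesis unfolding unitary_mat_def by simp
qed

definition sw :: "nat \<Rightarrow> nat \<Rightarrow> nat \<Rightarrow> nat" where
  "sw x y r = (if r = x then y else if r = y then x else r)"

lemma sw_bij: "x < n \<Longrightarrow> y < n \<Longrightarrow> bij_betw (sw x y) {..<n} {..<n}"
  by (rule bij_betw_byWitness[where f'="sw x y"]) (auto simp: sw_def)

definition cc :: complex where "cc = complex_of_real (1 / sqrt 2)"

lemma cc_sq: "cc * cc = 1/2"
proof -
  have "cc * cc = complex_of_real ((1 / sqrt 2) * (1 / sqrt 2))" unfolding cc_def of_real_mult ..
  also have "(1 / sqrt 2) * (1 / sqrt 2) = (1/2::real)"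
    by (simp add: real_sqrt_mult[symmetric])
  finally show ?thesis by simp
qed

lemma cnj_cc[simp]: "cnj cc = cc" by (simp add: cc_def)

definition had :: "nat \<Rightarrow> complex mat" where
  "had n = mat n n (\<lambda>(r,s). if r < 2 \<and> s < 2 then (if r = 0 \<and> s = 0 then cc else - cc)
                             else if r = s then 1 else 0)"

lemma had_unitary: assumes "2 \<le> n" shows "unitary_mat n (had n)"
proof -
  have dh: "dagger (had n) = had n" by (rule eq_matI) (auto simp: had_def)
  have sq: "had n * had n = 1\<^sub>m n"
  proof (rule eq_matI)
    fix r t assume rt: "r < dim_row (1\<^sub>m n)" "t < dim_col (1\<^sub>m n)"
    hence rt': "r < n" "t < n" by auto
    have "(had n * had n) $$ (r,t) = (\<Sum>k<n. had n $$ (r,k) * had n $$ (k,t))"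
      using rt' by (subst mult_entry[where n=n]) (auto simp: had_def)
    also have "\<dots> = (\<Sum>k\<in>{0,1} \<union> {2..<n}. had n $$ (r,k) * had n $$ (k,t))"
      using assms by (intro sum.cong) auto
    also have "\<dots> = had n $$ (r,0) * had n $$ (0,t) + had n $$ (r,1) * had n $$ (1,t)
         + (\<Sum>k\<in>{2..<n}. had n $$ (r,k) * had n $$ (k,t))"
      by (subst sum.union_disjoint) auto
    also have "\<dots> = 1\<^sub>m n $$ (r,t)"
    proof (cases "r < 2 \<and> t < 2")
      case True
      have z: "(\<Sum>k\<in>{2..<n}. had n $$ (r,k) * had n $$ (k,t)) = 0"
        using True rt' by (intro sum.neutral) (auto simp: had_def)
      show ?thesis using True rt' assms cc_sq unfolding z
        by (auto simp: had_def less_2_cases_iff mult.commute)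
    next
      case False
      show ?thesis
      proof (cases "r < 2")
        case True
        hence t2: "\<not> t < 2" using False by auto
        have z: "(\<Sum>k\<in>{2..<n}. had n $$ (r,k) * had n $$ (k,t)) = 0"
          using True rt' by (intro sum.neutral) (auto simp: had_def)
        show ?thesis using True t2 rt' assms unfolding z by (auto simp: had_def)
      next
        case f: False
        have "(\<Sum>k\<in>{2..<n}. had n $$ (r,k) * had n $$ (k,t)) = (\<Sum>k\<in>{2..<n}. if k = r then had n $$ (k,t) else 0)"
          using f rt' by (intro sum.cong) (auto simp: had_def)
        also have "\<dots> = had n $$ (r,t)" using f rt' by (simp add: sum.delta')
        finally show ?thesis using f rt' assms by (auto simp: had_def)
      qed
    qed
    finally show "(had n * had n) $$ (r,t) = 1\<^sub>m n $$ (r,t)" .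
  qed (auto simp: had_def)
  have "had n \<in> carrier_mat n n" by (simp add: had_def)
  thus ?thesis unfolding unitary_mat_def dh sq by simp
qed

lemma move_basis: assumes "i < n"
  shows "\<exists>V. unitary_mat n V \<and> (\<forall>r<n. V $$ (r,0) = (if r = i then 1 else 0))"
proof (intro exI conjI allI impI)
  show "unitary_mat n (mat n n (\<lambda>(r,s). 1\<^sub>m n $$ (sw 0 i r, s)))"
    by (rule perm_unitary[OF one_unitary sw_bij]) (use assms in auto)
  fix r assume "r < n"
  thus "mat n n (\<lambda>(r,s). 1\<^sub>m n $$ (sw 0 i r, s)) $$ (r,0) = (if r = i then 1 else 0)"
    using assms by (auto simp: sw_def)
qed

lemma move_diff: assumes "j < n" "l < n" "j \<noteq> l"
  shows "\<exists>W. unitary_mat n W \<and> (\<forall>s<n. W $$ (s,0) =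
     (if s = j then cc else 0) - (if s = l then cc else 0))"
proof -
  have n2: "2 \<le> n" using assms by auto
  define x where "x = sw 0 j l"
  define \<tau> where "\<tau> = sw 1 x \<circ> sw 0 j"
  have x: "x < n" "x \<noteq> 0" using assms by (auto simp: x_def sw_def)
  have tb: "bij_betw \<tau> {..<n} {..<n}" unfolding \<tau>_def
    by (rule bij_betw_trans[OF sw_bij sw_bij]) (use assms x n2 in auto)
  have tj: "\<tau> j = 0" using x by (auto simp: \<tau>_def sw_def)
  have tl: "\<tau> l = 1" using x by (auto simp: \<tau>_def sw_def x_def)
  have ti: "\<And>s. s < n \<Longrightarrow> \<tau> s = \<tau> j \<Longrightarrow> s = j" "\<And>s. s < n \<Longrightarrow> \<tau> s = \<tau> l \<Longrightarrow> s = l"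
    using tb assms by (auto simp: bij_betw_def inj_on_def)
  have tlt: "\<And>s. s < n \<Longrightarrow> \<tau> s < n" using tb by (auto simp: bij_betw_def)
  show ?thesis
  proof (intro exI conjI allI impI)
    show "unitary_mat n (mat n n (\<lambda>(r,s). had n $$ (\<tau> r, s)))"
      by (rule perm_unitary[OF had_unitary[OF n2] tb])
    fix s assume s: "s < n"
    show "mat n n (\<lambda>(r,s). had n $$ (\<tau> r, s)) $$ (s,0) =
     (if s = j then cc else 0) - (if s = l then cc else 0)"
    proof (cases "s = j \<or> s = l")
      case True thus ?thesis using s n2 tj tl assms by (auto simp: had_def)
    next
      case False
      hence "\<tau> s \<noteq> 0" "\<tau> s \<noteq> 1" using ti s tj tl by metis+
      thus ?thesis using False s n2 tlt[OF s] by (auto simp: had_def)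
    qed
  qed
qed

definition psi :: "nat \<Rightarrow> nat \<times> nat \<Rightarrow> nat \<times> nat \<Rightarrow> nat \<Rightarrow> complex" where
  "psi b u v p = (if vtx b p = u then cc else 0) - (if vtx b p = v then cc else 0)"

lemma kron_col0:
  assumes "V \<in> carrier_mat a a" "W \<in> carrier_mat b b" "p < a*b"
  shows "kron V W $$ (p,0) = V $$ (p div b, 0) * W $$ (p mod b, 0)"
proof -
  have "0 < b" "0 < a" using assms(3) by (auto intro: Nat.gr0I)
  thus ?thesis using assms by (simp add: kron_def)
qed

lemma edge_local:
  assumes "grid_graph a b E" "e \<in> E" "\<not> diagonal_edge e"
  shows "\<exists>V W u v. unitary_mat a V \<and> unitary_mat b W \<and> u \<noteq> v \<and> e = {u,v} \<and>
     (\<forall>p<a*b. kron V W $$ (p,0) = psi b u v p)"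
proof -
  obtain u v where uv: "u \<in> grid a b" "v \<in> grid a b" "u \<noteq> v" "e = {u,v}"
    using assms unfolding grid_graph_def by blast
  obtain i j k l where ij: "u = (i,j)" "v = (k,l)" by (cases u, cases v) auto
  have bd: "i < a" "k < a" "j < b" "l < b" using uv ij by (auto simp: grid_def)
  have nd: "i = k \<or> j = l" using assms(3) uv ij unfolding diagonal_edge_def by blast
  show ?thesis
  proof (cases "i = k")
    case True
    hence jl: "j \<noteq> l" using uv ij by auto
    obtain V where V: "unitary_mat a V" "\<forall>r<a. V $$ (r,0) = (if r = i then 1 else 0)"
      using move_basis[OF bd(1)] by blast
    obtain W where W: "unitary_mat b W" "\<forall>s<b. W $$ (s,0) =
       (if s = j then cc else 0) - (if s = l then cc else 0)"
      using move_diff[OF bd(3) bd(4) jl] by blast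
    have "\<forall>p<a*b. kron V W $$ (p,0) = psi b u v p"
    proof (intro allI impI)
      fix p assume p: "p < a*b"
      hence b0: "0 < b" by (auto intro: Nat.gr0I)
      have pd: "p div b < a" using p by (simp add: less_mult_imp_div_less)
      show "kron V W $$ (p,0) = psi b u v p"
      proof -
        have c: "V \<in> carrier_mat a a" "W \<in> carrier_mat b b" using V W by (auto simp: unitary_mat_def)
        have pm: "p mod b < b" using b0 by simp
        have "kron V W $$ (p,0) = V $$ (p div b, 0) * W $$ (p mod b, 0)" by (rule kron_col0[OF c p])
        also have "\<dots> = (if p div b = i then 1 else 0) * ((if p mod b = j then cc else 0) - (if p mod b = l then cc else 0))"
          using V(2) W(2) pd pm by simp
        also have "\<dots> = psi b u v p" using True ij by (cases "p div b = i") (auto simp: psi_def vtx_def)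
        finally show ?thesis .
      qed
    qed
    thus ?thesis using V W uv by blast
  next
    case False
    hence jl: "j = l" using nd by auto
    obtain V where V: "unitary_mat a V" "\<forall>s<a. V $$ (s,0) =
       (if s = i then cc else 0) - (if s = k then cc else 0)"
      using move_diff[OF bd(1) bd(2) False] by blast
    obtain W where W: "unitary_mat b W" "\<forall>r<b. W $$ (r,0) = (if r = j then 1 else 0)"
      using move_basis[OF bd(3)] by blast
    have "\<forall>p<a*b. kron V W $$ (p,0) = psi b u v p"
    proof (intro allI impI)
      fix p assume p: "p < a*b"
      hence b0: "0 < b" by (auto intro: Nat.gr0I)
      have pd: "p div b < a" using p by (simp add: less_mult_imp_div_less)
      show "kron V W $$ (p,0) = psi b u v p"
      proof -
        have c: "V \<in> carrier_mat a a" "W \<in> carrier_mat b b" using V W by (auto simp: unitary_mat_def)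
        have pm: "p mod b < b" using b0 by simp
        have "kron V W $$ (p,0) = V $$ (p div b, 0) * W $$ (p mod b, 0)" by (rule kron_col0[OF c p])
        also have "\<dots> = ((if p div b = i then cc else 0) - (if p div b = k then cc else 0)) * (if p mod b = j then 1 else 0)"
          using V(2) W(2) pd pm by simp
        also have "\<dots> = psi b u v p" using jl ij by (cases "p mod b = j") (auto simp: psi_def vtx_def)
        finally show ?thesis .
      qed
    qed
    thus ?thesis using V W uv by blast
  qed
qed

lemma rho0_eq: assumes "0 < b"
  shows "rho0 a b = mat (a*b) (a*b) (\<lambda>(i,j). if i = 0 \<and> j = 0 then 1 else 0)"
proof (rule eq_matI)
  fix i j assume ij: "i < dim_row (mat (a*b) (a*b) (\<lambda>(i,j). if i = 0 \<and> j = 0 then (1::complex) else 0))"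
     "j < dim_col (mat (a*b) (a*b) (\<lambda>(i,j). if i = 0 \<and> j = 0 then (1::complex) else 0))"
  hence "i < a*b" "j < a*b" by auto
  moreover have "i div b < a" "j div b < a" using calculation by (auto simp: less_mult_imp_div_less)
  moreover have iff: "\<And>x. (x div b = 0 \<and> x mod b = 0) = (x = 0)" using assms
    by (metis div_mult_mod_eq mult_0_right add_0 div_0 mod_0)
  ultimately have "rho0 a b $$ (i,j) = (if i div b = 0 \<and> j div b = 0 then 1 else 0) *
      (if i mod b = 0 \<and> j mod b = 0 then 1 else 0)"
    using assms by (simp add: rho0_def kron_def proj_basis_def)
  also have "\<dots> = (if i = 0 \<and> j = 0 then 1 else 0)" using iff[of i] iff[of j] by auto
  finally show "rho0 a b $$ (i,j) = mat (a*b) (a*b) (\<lambda>(i,j). if i = 0 \<and> j = 0 then (1::complex) else 0) $$ (i,j)"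
    using ij by simp
qed (auto simp: rho0_def kron_def proj_basis_def)

lemma conj_rho0:
  assumes "U \<in> carrier_mat (a*b) (a*b)" "0 < b" "p < a*b" "q < a*b"
  shows "(U * rho0 a b * dagger U) $$ (p,q) = U $$ (p,0) * cnj (U $$ (q,0))"
proof -
  let ?n = "a*b"
  have n0: "0 < ?n" by (rule le_less_trans[OF le0 assms(3)])
  have UR: "\<And>k. k < ?n \<Longrightarrow> (U * rho0 a b) $$ (p,k) = (if k = 0 then U $$ (p,0) else 0)"
  proof -
    fix k assume k: "k < ?n"
    have "(U * rho0 a b) $$ (p,k) = (\<Sum>m<?n. U $$ (p,m) * (if m = 0 \<and> k = 0 then 1 else 0))"
      using assms k by (subst mult_entry[where n="?n"]) (auto simp: rho0_eq intro!: sum.cong)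
    also have "\<dots> = (\<Sum>m<?n. if m = 0 then (if k = 0 then U $$ (p,m) else 0) else 0)"
      by (intro sum.cong) auto
    also have "\<dots> = (if k = 0 then U $$ (p,0) else 0)" using n0 by (simp add: sum.delta)
    finally show "(U * rho0 a b) $$ (p,k) = (if k = 0 then U $$ (p,0) else 0)" .
  qed
  have "(U * rho0 a b * dagger U) $$ (p,q) = (\<Sum>k<?n. (U * rho0 a b) $$ (p,k) * cnj (U $$ (q,k)))"
    using assms by (subst mult_entry[where n="?n"]) (auto simp: rho0_eq)
  also have "\<dots> = (\<Sum>k<?n. if k = 0 then U $$ (p,0) * cnj (U $$ (q,0)) else 0)"
    using UR by (intro sum.cong) auto
  also have "\<dots> = U $$ (p,0) * cnj (U $$ (q,0))" using n0 by (simp add: sum.delta)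
  finally show ?thesis .
qed

lemma vtx_inj: "0 < b \<Longrightarrow> vtx b p = vtx b q \<Longrightarrow> p = q"
  unfolding vtx_def by (metis div_mult_mod_eq prod.inject)

lemma psi_prod:
  assumes "u \<noteq> v" "0 < b"
  shows "psi b u v p * cnj (psi b u v q) =
    (if p = q then (if vtx b p \<in> {u,v} then 1/2 else 0)
     else (if {vtx b p, vtx b q} = {u,v} then -1/2 else 0))"
proof (cases "p = q")
  case True thus ?thesis using assms
    by (cases "vtx b p = u"; cases "vtx b p = v") (simp_all add: psi_def cc_sq)
next
  case False
  hence ne: "vtx b p \<noteq> vtx b q" using vtx_inj assms by blast
  show ?thesis using False ne assms
    by (cases "vtx b p = u"; cases "vtx b p = v"; cases "vtx b q = u"; cases "vtx b q = v")
       (simp_all add: psi_def cc_sq doubleton_eq_iff)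
qed

lemma kron_carrier: "V \<in> carrier_mat a a \<Longrightarrow> W \<in> carrier_mat b b \<Longrightarrow> kron V W \<in> carrier_mat (a*b) (a*b)"
  by (simp add: kron_def)

theorem mainTheorem2:
  fixes a b :: nat and E :: "(nat \<times> nat) set set"
  assumes "grid_graph a b E"
    and "card E \<ge> 1"
    and "\<forall>e\<in>E. \<not> diagonal_edge e"
  shows "\<exists>V W :: (nat \<times> nat) set \<Rightarrow> complex mat.
           (\<forall>e\<in>E. unitary_mat a (V e) \<and> unitary_mat b (W e)) \<and>
           rho a b E = (1 / of_nat (card E)) \<cdot>\<^sub>m
             mat_sum (a*b) (\<lambda>e. kron (V e) (W e) * rho0 a b * dagger (kron (V e) (W e))) E"
proof -
  have fin: "finite E" using assms(2) by (metis card.infinite not_one_le_zero)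
  have h: "\<forall>e\<in>E. \<exists>V W u v. unitary_mat a V \<and> unitary_mat b W \<and> u \<noteq> v \<and> e = {u,v} \<and>
     (\<forall>p<a*b. kron V W $$ (p,0) = psi b u v p)"
    using edge_local[OF assms(1)] assms(3) by blast
  obtain V where hV: "\<forall>e\<in>E. \<exists>W u v. unitary_mat a (V e) \<and> unitary_mat b W \<and> u \<noteq> v \<and> e = {u,v} \<and>
     (\<forall>p<a*b. kron (V e) W $$ (p,0) = psi b u v p)" using bchoice[OF h] by blast
  obtain W where hW: "\<forall>e\<in>E. \<exists>u v. unitary_mat a (V e) \<and> unitary_mat b (W e) \<and> u \<noteq> v \<and> e = {u,v} \<and>
     (\<forall>p<a*b. kron (V e) (W e) $$ (p,0) = psi b u v p)" using bchoice[OF hV] by blast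
  obtain U where hU: "\<forall>e\<in>E. \<exists>v. unitary_mat a (V e) \<and> unitary_mat b (W e) \<and> U e \<noteq> v \<and> e = {U e,v} \<and>
     (\<forall>p<a*b. kron (V e) (W e) $$ (p,0) = psi b (U e) v p)" using bchoice[OF hW] by blast
  obtain Y where hY: "\<forall>e\<in>E. unitary_mat a (V e) \<and> unitary_mat b (W e) \<and> U e \<noteq> Y e \<and> e = {U e,Y e} \<and>
     (\<forall>p<a*b. kron (V e) (W e) $$ (p,0) = psi b (U e) (Y e) p)" using bchoice[OF hU] by blast
  let ?m = "card E"
  have "rho a b E = (1 / of_nat ?m) \<cdot>\<^sub>m
             mat_sum (a*b) (\<lambda>e. kron (V e) (W e) * rho0 a b * dagger (kron (V e) (W e))) E"
  proof (rule eq_matI)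
    fix p q assume "p < dim_row ((1 / of_nat ?m) \<cdot>\<^sub>m
             mat_sum (a*b) (\<lambda>e. kron (V e) (W e) * rho0 a b * dagger (kron (V e) (W e))) E)"
      "q < dim_col ((1 / of_nat ?m) \<cdot>\<^sub>m
             mat_sum (a*b) (\<lambda>e. kron (V e) (W e) * rho0 a b * dagger (kron (V e) (W e))) E)"
    hence pq: "p < a*b" "q < a*b" by (auto simp: mat_sum_def)
    hence b0: "0 < b" by (auto intro: Nat.gr0I)
    have ent: "\<And>e. e \<in> E \<Longrightarrow> (kron (V e) (W e) * rho0 a b * dagger (kron (V e) (W e))) $$ (p,q)
       = (if p = q then (if vtx b p \<in> e then 1/2 else 0)
     else (if {vtx b p, vtx b q} = e then -1/2 else 0))"
    proof -
      fix e assume e: "e \<in> E"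
      have c: "kron (V e) (W e) \<in> carrier_mat (a*b) (a*b)"
        using hY e by (intro kron_carrier) (auto simp: unitary_mat_def)
      have "(kron (V e) (W e) * rho0 a b * dagger (kron (V e) (W e))) $$ (p,q)
          = psi b (U e) (Y e) p * cnj (psi b (U e) (Y e) q)"
        using conj_rho0[OF c b0 pq] hY e pq by simp
      also have "\<dots> = (if p = q then (if vtx b p \<in> e then 1/2 else 0)
          else (if {vtx b p, vtx b q} = e then -1/2 else 0))"
        using psi_prod[of "U e" "Y e" b p q] hY e b0 by metis
      finally show "?thesis e" .
    qed
    have rhs: "((1 / of_nat ?m) \<cdot>\<^sub>m
             mat_sum (a*b) (\<lambda>e. kron (V e) (W e) * rho0 a b * dagger (kron (V e) (W e))) E) $$ (p,q)
        = (1 / of_nat ?m) * (\<Sum>e\<in>E. (if p = q then (if vtx b p \<in> e then 1/2 else 0)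
          else (if {vtx b p, vtx b q} = e then -1/2 else 0)))"
      using pq ent by (simp add: mat_sum_def)
    have lhs: "rho a b E $$ (p,q) = (1 / (2 * of_nat ?m)) * (if p = q then of_nat (card {e\<in>E. vtx b p \<in> e})
     else if {vtx b p, vtx b q} \<in> E then -1 else 0)"
      using pq by (simp add: rho_def laplacian_def)
    show "rho a b E $$ (p,q) = ((1 / of_nat ?m) \<cdot>\<^sub>m
             mat_sum (a*b) (\<lambda>e. kron (V e) (W e) * rho0 a b * dagger (kron (V e) (W e))) E) $$ (p,q)"
    proof (cases "p = q")
      case True
      have T: "(p = q) = True" using True by simp
      have "(\<Sum>e\<in>E. (if vtx b p \<in> e then 1/2 else 0::complex)) = (\<Sum>e\<in>{e\<in>E. vtx b p \<in> e}. 1/2)"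
        using sum.inter_filter[OF fin, of "\<lambda>_. 1/2::complex" "\<lambda>e. vtx b p \<in> e"] by simp
      also have "\<dots> = of_nat (card {e\<in>E. vtx b p \<in> e}) * (1/2)" by simp
      finally have X: "(\<Sum>e\<in>E. (if vtx b p \<in> e then 1/2 else 0::complex)) = of_nat (card {e\<in>E. vtx b p \<in> e}) * (1/2)" .
      have "(\<Sum>e\<in>E. (if p = q then (if vtx b p \<in> e then 1/2 else 0)
          else (if {vtx b p, vtx b q} = e then -1/2 else 0::complex))) = of_nat (card {e\<in>E. vtx b p \<in> e}) * (1/2)"
        using X by (simp only: T if_True)
      thus ?thesis unfolding lhs rhs by (simp only: T if_True) simp
    next
      case False
      have "(\<Sum>e\<in>E. (if {vtx b p, vtx b q} = e then -1/2 else 0::complex))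
          = (if {vtx b p, vtx b q} \<in> E then -1/2 else 0)"
        using fin by (simp add: sum.delta)
      thus ?thesis using False unfolding lhs rhs by simp
    qed
  qed (auto simp: rho_def laplacian_def mat_sum_def)
  thus ?thesis using hY by blast
qed

end
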